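(* Let $k,\nu,\eta>0$, and let $(u,A)$ be a (sufficiently regular) solution on $\mathbb{T}^2\times(0,T)$ of the equation $\partial_tA+u\cdot\nabla_xA=(\nabla_xu)A+A(\nabla_xu)^T-2((\nabla_xu):A)A-2k(2A-\mathbb{I}_2)+\nu\Delta_xA$ with $u$ divergence-free. Suppose that $(\nabla_xu):A\in L^1(0,T;L^\infty)$, $\mathrm{Tr}\,A(0)\equiv1$ and $A(0)$ is positive definite. Then for all $t\in[0,T]$, $A(t)$ remains positive definite with $\mathrm{Tr}\,A(t)\equiv1$.
   Context: $A$ takes values in real symmetric $2\times2$ matrices, $u:\mathbb{T}^2\times(0,T)\to\mathbb{R}^2$ with $\nabla_x\cdot u=0$, $\mathbb{T}^2$ is the 2-torus, and $B:C=\sum_{ij}B_{ij}C_{ij}$. *)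

theory Defs
  imports "HOL-Analysis.Analysis"
begin

text \<open>Points of the torus T^2 are represented by points of real^2; functions on T^2
  are functions on real^2 that are 1-periodic in each coordinate direction.\<close>

definition periodic2 :: "(real^2 \<Rightarrow> 'b) \<Rightarrow> bool" where
  "periodic2 f \<longleftrightarrow> (\<forall>x i. f (x + axis i 1) = f x)"

definition ddot :: "real^2^2 \<Rightarrow> real^2^2 \<Rightarrow> real" where
  "ddot B C = (\<Sum>i\<in>UNIV. \<Sum>j\<in>UNIV. B $ i $ j * C $ i $ j)"

definition pos_def :: "real^2^2 \<Rightarrow> bool" where
  "pos_def M \<longleftrightarrow> (\<forall>v::real^2. v \<noteq> 0 \<longrightarrow> 0 < v \<bullet> (M *v v))"

text \<open>Velocity gradient: (grad u)_ij = d_j u_i, given the partial derivatives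
  Du j = d_j u.\<close>
definition gradmat :: "(2 \<Rightarrow> real^2) \<Rightarrow> real^2^2" where
  "gradmat Du = (\<chi> i j. Du j $ i)"

end

theory Submission
  imports Defs
begin

lemma comp_deriv:
  fixes f :: "real \<Rightarrow> real^2^2"
  assumes "(f has_vector_derivative f') F"
  shows "((\<lambda>s. f s $ i $ j) has_real_derivative f' $ i $ j) F"
proof -
  have bl: "bounded_linear (\<lambda>M::real^2^2. M $ i $ j)"
    using bounded_linear_compose[OF bounded_linear_vec_nth[of j] bounded_linear_vec_nth[of i]] by (simp add: o_def)
  have "((\<lambda>s. f s $ i $ j) has_derivative (\<lambda>x. (x *\<^sub>R f') $ i $ j)) F"
    using bounded_linear.has_derivative[OF bl assms[unfolded has_vector_derivative_def]] .
  moreover have "(\<lambda>x. x * f' $ i $ j) = (*) (f' $ i $ j)" by (auto simp: fun_eq_iff)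
  ultimately show ?thesis by (simp add: has_field_derivative_def)
qed
lemma per_int:
  assumes "periodic2 f"
  shows "f (x + of_int n *\<^sub>R axis i 1) = f x"
proof (induction n arbitrary: x rule: int_induct[where k=0])
  case base then show ?case by simp
next
  case (step1 n) 
  have "f (x + of_int (n+1) *\<^sub>R axis i 1) = f ((x + of_int n *\<^sub>R axis i 1) + axis i 1)"
    by (simp add: algebra_simps)
  also have "\<dots> = f x" using assms step1 unfolding periodic2_def by simp
  finally show ?case .
next
  case (step2 n)
  have "f (x + of_int (n-1) *\<^sub>R axis i 1) = f ((x + of_int (n-1) *\<^sub>R axis i 1) + axis i 1)"
    using assms unfolding periodic2_def by simp
  also have "\<dots> = f (x + of_int n *\<^sub>R axis i 1)" by (simp add: algebra_simps)
  finally show ?case using step2 by simp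
qed
definition red :: "real^2 \<Rightarrow> real^2" where "red x = (\<chi> i. frac (x $ i))"
lemma red_in: "red x \<in> cbox 0 1"
  unfolding red_def by (auto simp: mem_box_cart frac_lt_1 less_imp_le)
lemma per_red:
  assumes "periodic2 f" shows "f (red x) = f x"
proof -
  have "x = (red x + of_int \<lfloor>x$1\<rfloor> *\<^sub>R axis 1 1) + of_int \<lfloor>x$2\<rfloor> *\<^sub>R axis 2 1"
    by (simp add: red_def vec_eq_iff forall_2 axis_def frac_def)
  then have "f x = f ((red x + of_int \<lfloor>x$1\<rfloor> *\<^sub>R axis 1 1) + of_int \<lfloor>x$2\<rfloor> *\<^sub>R axis 2 1)" by simp
  also have "\<dots> = f (red x)" using per_int[OF assms] by simp
  finally show ?thesis by simp
qed

lemma second_deriv_test: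
  fixes f f1 :: "real \<Rightarrow> real"
  assumes d: "\<And>s. (f has_real_derivative f1 s) (at s)"
    and d2: "(f1 has_real_derivative L) (at 0)"
    and mx: "\<And>s. f s \<le> f 0"
  shows "f1 0 = 0 \<and> L \<le> 0"
proof -
  have z: "f1 0 = 0"
    using DERIV_local_max[OF d[of 0], of 1] mx by auto
  moreover have "L \<le> 0"
  proof (rule ccontr)
    assume "\<not> L \<le> 0"
    then have "L > 0" by simp
    from DERIV_pos_inc_right[OF d2 this] obtain e where e: "e > 0" "\<And>h. h > 0 \<Longrightarrow> h < e \<Longrightarrow> f1 0 < f1 (0 + h)"
      by blast
    have "\<exists>z>0. z < e/2 \<and> f (e/2) - f 0 = (e/2 - 0) * f1 z"
      using MVT2[of 0 "e/2" f f1] d e(1) by auto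
    then obtain z where "z > 0" "z < e/2" "f (e/2) - f 0 = (e/2) * f1 z" by auto
    moreover have "f1 z > 0" using e(2)[of z] z \<open>z > 0\<close> \<open>z < e/2\<close> by simp
    ultimately have "f (e/2) > f 0" using e(1) by (smt (verit) mult_pos_pos)
    then show False using mx[of "e/2"] by simp
  qed
  ultimately show ?thesis by simp
qed

lemma cont_slice:
  assumes "continuous_on (UNIV \<times> S) (\<lambda>(x,t). F x t)"
  shows "continuous_on S (F y)"
proof -
  have "continuous_on S (\<lambda>t. (\<lambda>(x,t). F x t) (y,t))"
    by (rule continuous_on_compose2[OF assms]) (auto intro!: continuous_intros)
  then show ?thesis by simp
qed

lemma first_touch:
  fixes q :: "real^2 \<Rightarrow> real \<Rightarrow> real" and b :: "real \<Rightarrow> real"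
  assumes qc: "continuous_on (UNIV \<times> {0..T}) (\<lambda>(x,t). q x t)"
    and bc: "continuous_on {0..T} b"
    and per: "\<And>t. periodic2 (\<lambda>x. q x t)"
    and init: "\<And>x. q x 0 < b 0"
    and touch: "\<And>x t. t \<in> {0<..<T} \<Longrightarrow> q x t = b t \<Longrightarrow> (\<forall>y. q y t \<le> b t)
        \<Longrightarrow> (\<forall>s\<in>{0..<t}. q x s < b s) \<Longrightarrow> False"
  shows "\<forall>t\<in>{0..<T}. \<forall>x. q x t < b t"
proof (rule ccontr)
  assume "\<not> ?thesis"
  then obtain t1 x1 where t1: "t1 \<in> {0..<T}" "b t1 \<le> q x1 t1" using not_less by blast
  define K where "K = cbox (0::real^2) 1 \<times> {0..t1}"
  define f where "f = (\<lambda>p::(real^2)\<times>real. q (fst p) (snd p) - b (snd p))"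
  have KT: "K \<subseteq> UNIV \<times> {0..T}" using t1 unfolding K_def by auto
  have fc: "continuous_on K f"
  proof -
    have "continuous_on K (\<lambda>p. q (fst p) (snd p))"
      using continuous_on_subset[OF qc KT] by (simp add: case_prod_beta')
    moreover have "continuous_on K (\<lambda>p. b (snd p))"
      by (rule continuous_on_compose2[OF bc continuous_on_snd]) (use KT in auto)
    ultimately show ?thesis unfolding f_def by (intro continuous_intros)
  qed
  define S where "S = K \<inter> f -` {0..}"
  have cS: "closed S" unfolding S_def
    by (rule continuous_closed_preimage[OF fc]) (auto simp: K_def intro: closed_Times)
  have "compact S"
    using compact_Int_closed[OF _ cS, of K] unfolding K_def S_def
    by (metis Int_absorb Int_assoc compact_Times compact_Icc compact_cbox)
  moreover have "(red x1, t1) \<in> S"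
    using t1 red_in per_red[OF per] unfolding S_def K_def f_def by auto
  then have "S \<noteq> {}" by auto
  moreover have "continuous_on S snd" by (intro continuous_intros)
  ultimately obtain p where p: "p \<in> S" "\<And>y. y \<in> S \<Longrightarrow> snd p \<le> snd y"
    using continuous_attains_inf[of S snd] by blast
  obtain xs ts where pe: "p = (xs, ts)" by force
  have ts: "ts \<in> {0..t1}" "b ts \<le> q xs ts" using p(1) pe unfolding S_def K_def f_def by auto
  have ts0: "ts \<noteq> 0" using ts init[of xs] by force
  have before: "q y s < b s" if "s \<in> {0..<ts}" for y s
  proof (rule ccontr)
    assume "\<not> q y s < b s"
    then have "(red y, s) \<in> S" using that ts red_in per_red[OF per]
      unfolding S_def K_def f_def by auto
    then show False using p(2)[of "(red y, s)"] pe that by auto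
  qed
  have atts: "q y ts \<le> b ts" for y
  proof (rule ccontr)
    assume neg: "\<not> q y ts \<le> b ts"
    have "continuous_on {0..T} (\<lambda>s. q y s)"
      by (rule cont_slice[OF qc])
    then have "continuous_on {0..T} (\<lambda>s. q y s - b s)" using bc by (intro continuous_intros)
    moreover have tsT: "ts \<in> {0..T}" using ts t1 by auto
    ultimately obtain d where d: "d > 0" "\<And>s. s \<in> {0..T} \<Longrightarrow> dist s ts < d \<Longrightarrow>
        dist (q y s - b s) (q y ts - b ts) < q y ts - b ts"
      using neg unfolding continuous_on_iff by (metis diff_gt_0_iff_gt not_le)
    define s where "s = max 0 (ts - d/2)"
    have s: "s \<in> {0..<ts}" "s \<in> {0..T}" "dist s ts < d" using ts ts0 d tsT unfolding s_def dist_real_def by auto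
    have "q y s - b s > 0" using d(2)[OF s(2,3)] unfolding dist_real_def by auto
    then show False using before[OF s(1), of y] by simp
  qed
  have "ts \<in> {0<..<T}" using ts ts0 t1 by auto
  moreover have "q xs ts = b ts" using ts(2) atts[of xs] by simp
  ultimately show False
    using touch[of ts xs] atts before by blast
qed

definition ad :: "real^2^2 \<Rightarrow> real^2^2 \<Rightarrow> real" where
  "ad M N = M$2$2*N$1$1 + M$1$1*N$2$2 - M$1$2*N$2$1 - M$2$1*N$1$2"
lemma tr2: "trace (M::real^2^2) = M$1$1 + M$2$2" by (simp add: trace_def sum_2)
lemma mm2: "((G::real^2^2) ** M) $ i $ j = G$i$1 * M$1$j + G$i$2 * M$2$j"
  by (simp add: matrix_matrix_mult_def sum_2)
lemma dd2: "ddot G M = G$1$1*M$1$1 + G$1$2*M$1$2 + G$2$1*M$2$1 + G$2$2*M$2$2"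
  by (simp add: ddot_def sum_2)
lemma mat2: "(mat 1 :: real^2^2) $ 1 $ 1 = 1" "(mat 1 :: real^2^2) $ 2 $ 2 = 1"
  "(mat 1 :: real^2^2) $ 1 $ 2 = 0" "(mat 1 :: real^2^2) $ 2 $ 1 = 0" by (simp_all add: mat_def)
lemma tp2: "transpose (M::real^2^2) $ i $ j = M $ j $ i" by (simp add: transpose_def)
lemma symD: "transpose (M::real^2^2) = M \<Longrightarrow> M$2$1 = M$1$2"
proof -
  assume h: "transpose M = M"
  have "transpose M $1$2 = M$1$2" by (subst h) (rule refl)
  then show ?thesis by (simp only: tp2)
qed
lemma eq_trace:
  fixes M G L :: "real^2^2"
  assumes "transpose M = M"
  shows "trace (G**M + M**transpose G - (2 * ddot G M) *\<^sub>R M - (2*k) *\<^sub>R (2 *\<^sub>R M - mat 1) + \<nu> *\<^sub>R L)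
    = 2*ddot G M*(1 - trace M) - 4*k*(trace M - 1) + \<nu>*trace L"
proof -
  have s: "M$2$1 = M$1$2" using symD[OF assms] .
  show ?thesis
    apply (simp only: tr2 vector_add_component vector_minus_component vector_scaleR_component mm2 tp2 mat2 dd2 s)
    by (simp add: algebra_simps)
qed
lemma ad_add: "ad M (X + Y) = ad M X + ad M Y" by (simp add: ad_def algebra_simps)
lemma ad_diff: "ad M (X - Y) = ad M X - ad M Y" by (simp add: ad_def algebra_simps)
lemma ad_scale: "ad M (r *\<^sub>R X) = r * ad M X" by (simp add: ad_def algebra_simps)
lemma ad_GM: "ad M (G ** M) = det M * (G$1$1 + G$2$2)"
  by (simp add: ad_def mm2 det_2 algebra_simps)
lemma ad_MG: "ad M (M ** transpose G) = det M * (G$1$1 + G$2$2)"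
  by (simp add: ad_def mm2 tp2 det_2 algebra_simps)
lemma ad_MM: "ad M M = 2 * det M" by (simp add: ad_def det_2)
lemma ad_I: "ad M (mat 1) = trace M" by (simp add: ad_def tr2 mat2)
lemma eq_ad:
  fixes M G L :: "real^2^2"
  assumes "G$1$1 + G$2$2 = 0"
  shows "ad M (G**M + M**transpose G - (2 * ddot G M) *\<^sub>R M - (2*k) *\<^sub>R (2 *\<^sub>R M - mat 1) + \<nu> *\<^sub>R L)
    = -4*ddot G M * det M - 2*k*(4*det M - trace M) + \<nu> * ad M L"
  by (simp only: ad_add ad_diff ad_scale ad_GM ad_MG ad_MM ad_I assms) simp

lemma line_deriv:
  fixes F F' :: "real^2 \<Rightarrow> real^2^2"
  assumes "\<And>y. ((\<lambda>r. F (y + r *\<^sub>R e)) has_vector_derivative F' y) (at 0)"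
  shows "((\<lambda>s. F (x + s *\<^sub>R e) $ a $ b) has_real_derivative F' (x + s *\<^sub>R e) $ a $ b) (at s)"
proof -
  have "((\<lambda>r. F ((x + s *\<^sub>R e) + r *\<^sub>R e) $ a $ b) has_real_derivative F' (x + s *\<^sub>R e) $ a $ b) (at 0)"
    by (rule comp_deriv[OF assms])
  moreover have "(\<lambda>r. F ((x + s *\<^sub>R e) + r *\<^sub>R e) $ a $ b) = (\<lambda>r. (\<lambda>s. F (x + s *\<^sub>R e) $ a $ b) (r + s))"
    by (simp add: scaleR_add_left algebra_simps)
  ultimately show ?thesis using DERIV_shift[of "\<lambda>s. F (x + s *\<^sub>R e) $ a $ b" _ 0 s] by simp
qed

lemma touch_time:
  fixes \<phi> b :: "real \<Rightarrow> real"
  assumes d: "(\<phi> has_real_derivative D) (at t)" and eq: "\<phi> t = b t"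
    and lt: "\<forall>s\<in>{0..<t}. \<phi> s < b s" and t0: "t > 0"
    and ev0: "eventually (\<lambda>s. L * (t - s) \<le> b t - b s) (at_left t)"
  shows "L \<le> D"
proof -
  have "eventually (\<lambda>s. s < t) (at_left t)" by (simp add: eventually_at_filter)
  then have ev: "eventually (\<lambda>s. L \<le> (b t - b s)/(t - s)) (at_left t)"
    using ev0 by eventually_elim (simp add: pos_le_divide_eq)
  have "((\<lambda>y. (\<phi> y - \<phi> t)/(y - t)) \<longlongrightarrow> D) (at t)" using d has_field_derivative_iff by blast
  then have lim: "((\<lambda>y. (\<phi> y - \<phi> t)/(y - t)) \<longlongrightarrow> D) (at_left t)"
    by (rule tendsto_mono[OF at_le, rotated]) simp
  have "eventually (\<lambda>s. s \<in> {0<..<t}) (at_left t)" using eventually_at_left_real[OF t0] .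
  then have "eventually (\<lambda>s. s \<in> {0<..<t} \<and> L \<le> (b t - b s)/(t - s)) (at_left t)"
    using ev by (rule eventually_conj)
  then have "eventually (\<lambda>s. L \<le> (\<phi> s - \<phi> t)/(s - t)) (at_left t)"
  proof (rule eventually_mono, elim conjE)
    fix s assume L: "L \<le> (b t - b s)/(t - s)" and s: "s \<in> {0<..<t}"
    have "\<phi> s < b s" using lt s by auto
    then have "(b t - b s)/(t - s) \<le> (\<phi> t - \<phi> s)/(t - s)"
      using s eq by (intro divide_right_mono) auto
    also have "\<dots> = (\<phi> s - \<phi> t)/(s - t)" by (simp add: divide_simps algebra_simps)
    finally show "L \<le> (\<phi> s - \<phi> t)/(s - t)" using L by simp
  qed
  then show ?thesis by (rule tendsto_lowerbound[OF lim]) simp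
qed

lemma G_bound:
  fixes g h :: "real \<Rightarrow> real"
  assumes gi: "g integrable_on {0..T}" and hc: "continuous_on {0<..<T} h"
    and hg: "\<And>r. r \<in> {0<..<T} \<Longrightarrow> h r \<le> g r" and t: "t \<in> {0<..<T}" and dl: "\<delta> > 0"
  shows "eventually (\<lambda>s. (h t - \<delta>)*(t - s) \<le> integral {0..t} g - integral {0..s} g) (at_left t)"
proof -
  have "isCont h t" using continuous_on_eq_continuous_at[of "{0<..<T}" h] hc t by simp
  then obtain d where d: "d > 0" "\<And>r. r \<noteq> t \<Longrightarrow> norm (r - t) < d \<Longrightarrow> norm (h r - h t) < \<delta>"
    unfolding isCont_def LIM_eq using dl by blast
  have "eventually (\<lambda>s. s \<in> {max 0 (t-d)<..<t}) (at_left t)"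
    by (rule eventually_at_left_real) (use t d in auto)
  then show ?thesis
  proof (rule eventually_mono)
    fix s assume s: "s \<in> {max 0 (t-d)<..<t}"
    have gt: "g integrable_on {0..t}" using integrable_subinterval_real[OF gi, of 0 t] t by auto
    have gst: "g integrable_on {s..t}" using integrable_subinterval_real[OF gi, of s t] t s by auto
    have "integral {0..s} g + integral {s..t} g = integral {0..t} g"
      using Henstock_Kurzweil_Integration.integral_combine[OF _ _ gt, of s] s by auto
    moreover have "integral {s..t} (\<lambda>_. h t - \<delta>) \<le> integral {s..t} g"
    proof (rule integral_le[OF _ gst])
      show "(\<lambda>_. h t - \<delta>) integrable_on {s..t}" by (rule integrable_const_ivl)
      fix r assume r: "r \<in> {s..t}"
      have "h t - \<delta> \<le> h r"
      proof (cases "r = t")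
        case False
        then have "norm (h r - h t) < \<delta>" using d(2)[of r] r s by auto
        then show ?thesis by auto
      qed (use dl in simp)
      also have "h r \<le> g r" using hg[of r] r s t by auto
      finally show "h t - \<delta> \<le> g r" .
    qed
    moreover have "integral {s..t} (\<lambda>_. h t - \<delta>) = (h t - \<delta>)*(t - s)" using s by simp
    ultimately show "(h t - \<delta>)*(t - s) \<le> integral {0..t} g - integral {0..s} g" by linarith
  qed
qed

lemma exp_diff_ge: "exp b * (a - b) \<le> exp a - exp (b::real)"
proof -
  have "1 + (a - b) \<le> exp (a - b)" by (rule exp_ge_add_one_self)
  then have "exp b * (1 + (a - b)) \<le> exp b * exp (a - b)" by (rule mult_left_mono) simp
  also have "exp b * exp (a - b) = exp a" by (simp add: exp_add[symmetric])
  finally show ?thesis by (simp add: algebra_simps)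
qed

lemma per_comp: "periodic2 f \<Longrightarrow> periodic2 (\<lambda>x. F (f x))"
  by (simp add: periodic2_def)

lemma small_le0:
  fixes y K :: real
  assumes K: "K > 0" and h: "\<And>e. e > 0 \<Longrightarrow> y < e * K"
  shows "y \<le> 0"
proof (rule ccontr)
  assume "\<not> y \<le> 0"
  then have y: "y > 0" by simp
  have "y < (y / (2*K)) * K" using h[of "y/(2*K)"] y K by simp
  then show False using y K by (simp add: field_simps)
qed

lemma cont_end:
  fixes \<phi> :: "real \<Rightarrow> real"
  assumes "continuous_on {0..T} \<phi>" "0 < T" "\<And>t. t \<in> {0..<T} \<Longrightarrow> 0 \<le> \<phi> t"
  shows "0 \<le> \<phi> T"
proof -
  have "(\<phi> \<longlongrightarrow> \<phi> T) (at T within {0..T})" using assms(1,2) by (simp add: continuous_on_def)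
  then have lim: "(\<phi> \<longlongrightarrow> \<phi> T) (at_left T)" using at_within_Icc_at_left[OF assms(2)] by simp
  have "eventually (\<lambda>s. s \<in> {0<..<T}) (at_left T)" using eventually_at_left_real[OF assms(2)] .
  then have "eventually (\<lambda>s. 0 \<le> \<phi> s) (at_left T)" by (rule eventually_mono) (use assms(3) in auto)
  then show ?thesis by (rule tendsto_lowerbound[OF lim]) simp
qed

lemma isCont_left:
  fixes \<phi> :: "real \<Rightarrow> real"
  assumes "continuous_on {0..T} \<phi>" "t \<in> {0<..<T}"
  shows "(\<phi> \<longlongrightarrow> \<phi> t) (at_left t)"
proof -
  have "continuous_on {0<..<T} \<phi>" by (rule continuous_on_subset[OF assms(1)]) auto
  then have "isCont \<phi> t" using continuous_on_eq_continuous_at[of "{0<..<T}" \<phi>] assms(2) by simp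
  then show ?thesis unfolding isCont_def by (rule tendsto_mono[OF at_le, rotated]) simp
qed

lemma pd_det:
  fixes M :: "real^2^2"
  assumes s: "transpose M = M" and pd: "pos_def M"
  shows "det M > 0"
proof -
  have s': "M$2$1 = M$1$2" using symD[OF s] .
  have "0 < axis 1 1 \<bullet> (M *v axis 1 (1::real))"
  proof -
    have "axis 1 (1::real) \<noteq> (0::real^2)" by (simp add: axis_eq_0_iff)
    then show ?thesis using pd unfolding pos_def_def by blast
  qed
  then have a: "M$1$1 > 0"
    by (simp add: inner_vec_def matrix_vector_mult_def sum_2 axis_def)
  define v :: "real^2" where "v = (\<chi> i. if i = 1 then M$1$2 else - M$1$1)"
  have v2: "v$1 = M$1$2" "v$2 = - M$1$1" unfolding v_def by simp_all
  have "v$2 \<noteq> 0" using a v2 by simp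
  then have "v \<noteq> 0" by force
  then have "0 < v \<bullet> (M *v v)" using pd unfolding pos_def_def by blast
  also have "v \<bullet> (M *v v) = M$1$1 * det M"
    by (simp add: inner_vec_def matrix_vector_mult_def sum_2 v2 det_2 s' algebra_simps power2_eq_square)
  finally show ?thesis using a by (simp add: zero_less_mult_iff)
qed

lemma det_pd:
  fixes M :: "real^2^2"
  assumes s: "transpose M = M" and tr: "trace M = 1" and d: "det M > 0"
  shows "pos_def M"
  unfolding pos_def_def
proof (intro allI impI)
  fix v :: "real^2" assume v: "v \<noteq> 0"
  have s': "M$2$1 = M$1$2" using symD[OF s] .
  define a where "a = M$1$1"
  define b where "b = M$1$2"
  define c where "c = M$2$2"
  have ac: "a + c = 1" using tr unfolding a_def c_def tr2 .
  have dd: "a*c - b*b > 0" using d unfolding a_def b_def c_def det_2 s' .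
  have bb: "b*b \<ge> 0" by simp
  have apos: "a > 0"
  proof (rule ccontr)
    assume "\<not> a > 0"
    then have "a*c \<le> 0" using ac by (intro mult_nonpos_nonneg) auto
    then show False using dd bb by linarith
  qed
  have eq: "v \<bullet> (M *v v) = a*(v$1)^2 + 2*b*(v$1)*(v$2) + c*(v$2)^2"
    by (simp add: inner_vec_def matrix_vector_mult_def sum_2 s' a_def b_def c_def algebra_simps power2_eq_square)
  have key: "a * (v \<bullet> (M *v v)) = (a * v$1 + b * v$2)^2 + (a*c - b*b)*(v$2)^2"
    unfolding eq by (simp add: algebra_simps power2_eq_square)
  show "0 < v \<bullet> (M *v v)"
  proof (cases "v$2 = 0")
    case True
    then have "v$1 \<noteq> 0" using v by (simp add: vec_eq_iff forall_2)
    then show ?thesis unfolding eq using True apos by simp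
  next
    case False
    then have "a * (v \<bullet> (M *v v)) > 0" unfolding key using dd
      by (simp add: add_nonneg_pos)
    then show ?thesis using apos by (simp add: zero_less_mult_iff)
  qed
qed

theorem proposition1:
  fixes k \<nu> \<eta> T :: real
    and u :: "real^2 \<Rightarrow> real \<Rightarrow> real^2"
    and A :: "real^2 \<Rightarrow> real \<Rightarrow> real^2^2"
    and Du :: "2 \<Rightarrow> real^2 \<Rightarrow> real \<Rightarrow> real^2"
    and At :: "real^2 \<Rightarrow> real \<Rightarrow> real^2^2"
    and DA :: "2 \<Rightarrow> real^2 \<Rightarrow> real \<Rightarrow> real^2^2"
    and D2A :: "2 \<Rightarrow> 2 \<Rightarrow> real^2 \<Rightarrow> real \<Rightarrow> real^2^2"
  assumes k_pos: "k > 0" and nu_pos: "\<nu> > 0" and eta_pos: "\<eta> > 0" and T_pos: "T > 0"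
    \<comment> \<open>periodicity in space (functions on the torus)\<close>
    and u_per: "\<And>t. periodic2 (\<lambda>x. u x t)"
    and A_per: "\<And>t. periodic2 (\<lambda>x. A x t)"
    \<comment> \<open>A is symmetric-matrix valued\<close>
    and A_sym: "\<And>x t. t \<in> {0..T} \<Longrightarrow> transpose (A x t) = A x t"
    \<comment> \<open>regularity: derivatives exist and are continuous\<close>
    and A_cont: "continuous_on (UNIV \<times> {0..T}) (\<lambda>(x, t). A x t)"
    and u_cont: "continuous_on (UNIV \<times> {0..T}) (\<lambda>(x, t). u x t)"
    and At_deriv: "\<And>x t. t \<in> {0<..<T} \<Longrightarrow> ((\<lambda>s. A x s) has_vector_derivative At x t) (at t)"
    and DA_deriv: "\<And>i x t. t \<in> {0<..<T} \<Longrightarrow>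
        ((\<lambda>s. A (x + s *\<^sub>R axis i 1) t) has_vector_derivative DA i x t) (at 0)"
    and D2A_deriv: "\<And>i j x t. t \<in> {0<..<T} \<Longrightarrow>
        ((\<lambda>s. DA i (x + s *\<^sub>R axis j 1) t) has_vector_derivative D2A i j x t) (at 0)"
    and Du_deriv: "\<And>i x t. t \<in> {0<..<T} \<Longrightarrow>
        ((\<lambda>s. u (x + s *\<^sub>R axis i 1) t) has_vector_derivative Du i x t) (at 0)"
    and At_cont: "continuous_on (UNIV \<times> {0<..<T}) (\<lambda>(x, t). At x t)"
    and DA_cont: "\<And>i. continuous_on (UNIV \<times> {0<..<T}) (\<lambda>(x, t). DA i x t)"
    and D2A_cont: "\<And>i j. continuous_on (UNIV \<times> {0<..<T}) (\<lambda>(x, t). D2A i j x t)"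
    and Du_cont: "\<And>i. continuous_on (UNIV \<times> {0<..<T}) (\<lambda>(x, t). Du i x t)"
    \<comment> \<open>u divergence free\<close>
    and div_free: "\<And>x t. t \<in> {0<..<T} \<Longrightarrow> (\<Sum>i\<in>UNIV. Du i x t $ i) = 0"
    \<comment> \<open>the equation\<close>
    and eqn: "\<And>x t. t \<in> {0<..<T} \<Longrightarrow>
        At x t + (\<Sum>i\<in>UNIV. u x t $ i *\<^sub>R DA i x t)
        = gradmat (\<lambda>i. Du i x t) ** A x t + A x t ** transpose (gradmat (\<lambda>i. Du i x t))
          - (2 * ddot (gradmat (\<lambda>i. Du i x t)) (A x t)) *\<^sub>R A x t
          - (2 * k) *\<^sub>R (2 *\<^sub>R A x t - mat 1)
          + \<nu> *\<^sub>R (\<Sum>i\<in>UNIV. D2A i i x t)"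
    \<comment> \<open>(grad u) : A in L^1(0,T; L^infinity)\<close>
    and L1Linf: "\<exists>g. g integrable_on {0..T} \<and>
        (\<forall>t\<in>{0<..<T}. \<forall>x. \<bar>ddot (gradmat (\<lambda>i. Du i x t)) (A x t)\<bar> \<le> g t)"
    \<comment> \<open>initial data\<close>
    and init_tr: "\<And>x. trace (A x 0) = 1"
    and init_pd: "\<And>x. pos_def (A x 0)"
  shows "\<forall>t\<in>{0..T}. \<forall>x. pos_def (A x t) \<and> trace (A x t) = 1"
proof -
  obtain g where gi: "g integrable_on {0..T}"
    and gb: "\<And>t x. t \<in> {0<..<T} \<Longrightarrow> \<bar>ddot (gradmat (\<lambda>i. Du i x t)) (A x t)\<bar> \<le> g t"
    using L1Linf by blast
  define c where "c x t = ddot (gradmat (\<lambda>i. Du i x t)) (A x t)" for x t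
  define G where "G t = integral {0..t} g" for t
  have Gc: "continuous_on {0..T} G" unfolding G_def by (rule indefinite_integral_continuous_1[OF gi])
  have A_cont': "continuous_on (UNIV \<times> {0..T}) (\<lambda>p. A (fst p) (snd p))"
    using A_cont by (simp add: case_prod_beta')
  have Acomp: "continuous_on {0..T} (\<lambda>t. A x t $ a $ b)" for x a b
    using cont_slice[OF A_cont, of x] by (intro continuous_intros)
  have Acomp': "continuous_on {0<..<T} (\<lambda>t. A x t $ a $ b)" for x a b
    by (rule continuous_on_subset[OF Acomp]) auto
  have Ducomp: "continuous_on {0<..<T} (\<lambda>t. Du i x t $ a)" for x i a
    using cont_slice[OF Du_cont, of i x] by (intro continuous_intros)
  have gm: "gradmat D $ i $ j = D j $ i" for D i j by (simp add: gradmat_def)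
  have cc: "continuous_on {0<..<T} (\<lambda>t. \<bar>c x t\<bar>)" for x
    unfolding c_def dd2 gm by (intro continuous_intros Acomp' Ducomp)
  have hg: "\<And>r. r \<in> {0<..<T} \<Longrightarrow> \<bar>c x r\<bar> \<le> g r" for x
    unfolding c_def using gb by blast
  have dt: "((\<lambda>s. A x s $ a $ b) has_real_derivative At x t $ a $ b) (at t)" if "t \<in> {0<..<T}" for x t a b
    by (rule comp_deriv[OF At_deriv[OF that]])
  have dl: "((\<lambda>s. A (x + s *\<^sub>R axis i 1) t $ a $ b) has_real_derivative DA i (x + s *\<^sub>R axis i 1) t $ a $ b) (at s)"
    if "t \<in> {0<..<T}" for x t i a b s
    by (rule line_deriv[of "\<lambda>y. A y t" "axis i 1" "\<lambda>y. DA i y t"]) (rule DA_deriv[OF that])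
  have dl0: "((\<lambda>s. A (x + s *\<^sub>R axis i 1) t $ a $ b) has_real_derivative DA i x t $ a $ b) (at 0)"
    if "t \<in> {0<..<T}" for x t i a b
    using dl[OF that, of x i a b 0] by simp
  have dl2: "((\<lambda>s. DA i (x + s *\<^sub>R axis i 1) t $ a $ b) has_real_derivative D2A i i x t $ a $ b) (at 0)"
    if "t \<in> {0<..<T}" for x t i a b
    by (rule comp_deriv[OF D2A_deriv[OF that]])
  have eqn': "At x t = gradmat (\<lambda>i. Du i x t) ** A x t + A x t ** transpose (gradmat (\<lambda>i. Du i x t))
          - (2 * c x t) *\<^sub>R A x t - (2 * k) *\<^sub>R (2 *\<^sub>R A x t - mat 1)
          + \<nu> *\<^sub>R (D2A 1 1 x t + D2A 2 2 x t) - (u x t $ 1 *\<^sub>R DA 1 x t + u x t $ 2 *\<^sub>R DA 2 x t)"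
    if "t \<in> {0<..<T}" for x t
    using eqn[OF that, of x] unfolding c_def sum_2 by (simp add: algebra_simps)
  have divG: "gradmat (\<lambda>i. Du i x t) $ 1 $ 1 + gradmat (\<lambda>i. Du i x t) $ 2 $ 2 = 0"
    if "t \<in> {0<..<T}" for x t
    using div_free[OF that, of x] unfolding gm sum_2 .
  have trace_lt: "\<forall>t\<in>{0..<T}. \<forall>x. \<sigma> * (trace (A x t) - 1) < \<epsilon> * exp (2 * G t + 2 * k * t)"
    if sg: "\<sigma> \<in> {-1, 1}" and ep: "\<epsilon> > 0" for \<sigma> \<epsilon> :: real
  proof -
    define q where "q x t = \<sigma> * (A x t $ 1 $ 1 + A x t $ 2 $ 2 - 1)" for x t
    define E where "E t = exp (2 * G t + 2 * k * t)" for t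
    define b where "b t = \<epsilon> * E t" for t
    have qc: "continuous_on (UNIV \<times> {0..T}) (\<lambda>(x,t). q x t)"
      unfolding q_def case_prod_beta' by (intro continuous_intros A_cont')
    have Ec: "continuous_on {0..T} E" unfolding E_def by (intro continuous_intros Gc)
    have bc: "continuous_on {0..T} b" unfolding b_def by (intro continuous_intros Ec)
    have per: "periodic2 (\<lambda>x. q x t)" for t
      unfolding q_def by (rule per_comp[OF A_per[of t], of "\<lambda>M. \<sigma> * (M $ 1 $ 1 + M $ 2 $ 2 - 1)"])
    have init: "q x 0 < b 0" for x
      using init_tr[of x] ep unfolding q_def b_def E_def tr2 by simp
    have touch: False if t: "t \<in> {0<..<T}" and eqt: "q x t = b t" and mx: "\<forall>y. q y t \<le> b t"
      and bef: "\<forall>s\<in>{0..<t}. q x s < b s" for x t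
    proof -
      define B where "B = b t"
      have Bpos: "B > 0" unfolding B_def b_def E_def using ep by simp
      have sp: "\<sigma> * (DA i x t $ 1 $ 1 + DA i x t $ 2 $ 2) = 0 \<and> \<sigma> * (D2A i i x t $ 1 $ 1 + D2A i i x t $ 2 $ 2) \<le> 0" for i
      proof -
        have "((\<lambda>s. \<sigma> * (DA i (x + s *\<^sub>R axis i 1) t $ 1 $ 1 + DA i (x + s *\<^sub>R axis i 1) t $ 2 $ 2)) 0 = 0)
            \<and> \<sigma> * (D2A i i x t $ 1 $ 1 + D2A i i x t $ 2 $ 2) \<le> 0"
        proof (rule second_deriv_test[of "\<lambda>s. q (x + s *\<^sub>R axis i 1) t"
            "\<lambda>s. \<sigma> * (DA i (x + s *\<^sub>R axis i 1) t $ 1 $ 1 + DA i (x + s *\<^sub>R axis i 1) t $ 2 $ 2)"])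
          fix s
          show "((\<lambda>s. q (x + s *\<^sub>R axis i 1) t) has_real_derivative
               \<sigma> * (DA i (x + s *\<^sub>R axis i 1) t $ 1 $ 1 + DA i (x + s *\<^sub>R axis i 1) t $ 2 $ 2)) (at s)"
            unfolding q_def by (auto intro!: derivative_eq_intros dl[OF t])
        next
          show "((\<lambda>s. \<sigma> * (DA i (x + s *\<^sub>R axis i 1) t $ 1 $ 1 + DA i (x + s *\<^sub>R axis i 1) t $ 2 $ 2))
              has_real_derivative \<sigma> * (D2A i i x t $ 1 $ 1 + D2A i i x t $ 2 $ 2)) (at 0)"
            by (auto intro!: derivative_eq_intros dl2[OF t])
        next
          fix s show "q (x + s *\<^sub>R axis i 1) t \<le> q (x + 0 *\<^sub>R axis i 1) t" using mx eqt by simp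
        qed
        then show ?thesis by simp
      qed
      have s0: "\<sigma> \<noteq> 0" using sg by auto
      have trD: "DA i x t $ 1 $ 1 + DA i x t $ 2 $ 2 = 0" for i using sp[of i] s0 by simp
      have trD2: "\<sigma> * (D2A i i x t $ 1 $ 1 + D2A i i x t $ 2 $ 2) \<le> 0" for i using sp[of i] by simp
      define C where "C = \<bar>c x t\<bar>"
      have Cnn: "C \<ge> 0" unfolding C_def by simp
      have dq: "((\<lambda>s. q x s) has_real_derivative \<sigma> * (At x t $ 1 $ 1 + At x t $ 2 $ 2)) (at t)"
        unfolding q_def by (auto intro!: derivative_eq_intros dt[OF t])
      have "trace (At x t) = 2 * c x t * (1 - trace (A x t)) - 4 * k * (trace (A x t) - 1)
          + \<nu> * (trace (D2A 1 1 x t) + trace (D2A 2 2 x t))"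
      proof -
        have "trace (At x t) = trace (gradmat (\<lambda>i. Du i x t) ** A x t + A x t ** transpose (gradmat (\<lambda>i. Du i x t))
          - (2 * ddot (gradmat (\<lambda>i. Du i x t)) (A x t)) *\<^sub>R A x t - (2 * k) *\<^sub>R (2 *\<^sub>R A x t - mat 1)
          + \<nu> *\<^sub>R (D2A 1 1 x t + D2A 2 2 x t))
          - (u x t $ 1 * trace (DA 1 x t) + u x t $ 2 * trace (DA 2 x t))"
          unfolding eqn'[OF t] c_def by (simp only: tr2 vector_add_component vector_minus_component vector_scaleR_component) (simp add: algebra_simps)
        also have "\<dots> = 2 * c x t * (1 - trace (A x t)) - 4 * k * (trace (A x t) - 1)
          + \<nu> * (trace (D2A 1 1 x t) + trace (D2A 2 2 x t))"
        proof -
          have Asym: "transpose (A x t) = A x t" using A_sym t by auto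
          have trD': "trace (DA i x t) = 0" for i using trD[of i] by (simp add: tr2)
          have e: "trace (gradmat (\<lambda>i. Du i x t) ** A x t + A x t ** transpose (gradmat (\<lambda>i. Du i x t))
          - (2 * ddot (gradmat (\<lambda>i. Du i x t)) (A x t)) *\<^sub>R A x t - (2 * k) *\<^sub>R (2 *\<^sub>R A x t - mat 1)
          + \<nu> *\<^sub>R (D2A 1 1 x t + D2A 2 2 x t)) = 2 * ddot (gradmat (\<lambda>i. Du i x t)) (A x t) * (1 - trace (A x t))
            - 4 * k * (trace (A x t) - 1) + \<nu> * trace (D2A 1 1 x t + D2A 2 2 x t)"
            by (rule eq_trace[OF Asym])
          show ?thesis by (simp only: e trD') (simp add: c_def tr2)
        qed
        finally show ?thesis .
      qed
      then have Dle: "\<sigma> * (At x t $ 1 $ 1 + At x t $ 2 $ 2) \<le> (2 * C - 4 * k) * B"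
      proof -
        assume h: "trace (At x t) = 2 * c x t * (1 - trace (A x t)) - 4 * k * (trace (A x t) - 1)
          + \<nu> * (trace (D2A 1 1 x t) + trace (D2A 2 2 x t))"
        have qB: "\<sigma> * (trace (A x t) - 1) = B" using eqt unfolding q_def B_def tr2 by simp
        have "\<sigma> * (At x t $ 1 $ 1 + At x t $ 2 $ 2) = -2 * c x t * (\<sigma> * (trace (A x t) - 1)) - 4 * k * (\<sigma> * (trace (A x t) - 1))
           + \<nu> * (\<sigma> * trace (D2A 1 1 x t) + \<sigma> * trace (D2A 2 2 x t))"
          unfolding tr2[symmetric] h by (simp add: algebra_simps)
        also have "\<dots> = -2 * c x t * B - 4 * k * B + \<nu> * (\<sigma> * trace (D2A 1 1 x t) + \<sigma> * trace (D2A 2 2 x t))"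
          using qB by simp
        also have "\<dots> \<le> -2 * c x t * B - 4 * k * B"
        proof -
          have "\<sigma> * trace (D2A 1 1 x t) + \<sigma> * trace (D2A 2 2 x t) \<le> 0"
            using trD2[of 1] trD2[of 2] unfolding tr2 by linarith
          then have "\<nu> * (\<sigma> * trace (D2A 1 1 x t) + \<sigma> * trace (D2A 2 2 x t)) \<le> 0"
            using nu_pos by (simp add: mult_nonneg_nonpos)
          then show ?thesis by linarith
        qed
        also have "\<dots> \<le> (2 * C - 4 * k) * B"
        proof -
          have "- c x t * B \<le> \<bar>c x t\<bar> * B" using Bpos by (intro mult_right_mono) auto
          then show ?thesis unfolding C_def by (simp add: algebra_simps)
        qed
        finally show ?thesis .
      qed
      define \<theta> where "\<theta> = (2 * C + k/2) / (2 * C + k)"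
      have th1: "\<theta> < 1" unfolding \<theta>_def using Cnn k_pos by (simp add: divide_simps)
      have th2: "\<theta> * (2 * C + k) = 2 * C + k/2" unfolding \<theta>_def using Cnn k_pos by (simp add: divide_simps)
      have Epos: "E s > 0" for s unfolding E_def by simp
      have ev1: "eventually (\<lambda>s. (C - k/2) * (t - s) \<le> G t - G s) (at_left t)"
        unfolding G_def C_def using G_bound[OF gi cc[of x] hg t, of "k/2"] k_pos by simp
      have "(E \<longlongrightarrow> E t) (at_left t)" by (rule isCont_left[OF Ec t])
      then have ev2: "eventually (\<lambda>s. \<theta> * E t < E s) (at_left t)"
        using th1 Epos[of t] by (intro order_tendstoD(1)) auto
      have ev3: "eventually (\<lambda>s. s \<in> {0<..<t}) (at_left t)" using eventually_at_left_real t by simp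
      have ev: "eventually (\<lambda>s. B * (2 * C + k/2) * (t - s) \<le> b t - b s) (at_left t)"
        using ev1 ev2 ev3
      proof eventually_elim
        case (elim s)
        have ts: "t - s > 0" using elim(3) by simp
        have h1: "(2 * G t + 2 * k * t) - (2 * G s + 2 * k * s) \<ge> (2 * C + k) * (t - s)"
        proof -
          have "(2 * C + k) * (t - s) = 2 * ((C - k/2) * (t - s)) + 2 * k * (t - s)" by (simp add: field_simps)
          moreover have "k * (t - s) = k * t - k * s" by (simp add: algebra_simps)
          ultimately show ?thesis using elim(1) by linarith
        qed
        have h2: "E t - E s \<ge> E s * ((2 * G t + 2 * k * t) - (2 * G s + 2 * k * s))"
          unfolding E_def by (rule exp_diff_ge)
        have h3: "E s * ((2 * G t + 2 * k * t) - (2 * G s + 2 * k * s)) \<ge> E s * ((2 * C + k) * (t - s))"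
          using h1 Epos[of s] by (simp add: mult_left_mono)
        have h4: "E s * ((2 * C + k) * (t - s)) \<ge> (\<theta> * E t) * ((2 * C + k) * (t - s))"
          using elim(2) Cnn k_pos ts by (intro mult_right_mono) auto
        have h5: "(\<theta> * E t) * ((2 * C + k) * (t - s)) = E t * (2 * C + k/2) * (t - s)"
        proof -
          have "(\<theta> * E t) * ((2 * C + k) * (t - s)) = E t * (\<theta> * (2 * C + k)) * (t - s)"
            by (simp only: mult_ac)
          then show ?thesis using th2 by simp
        qed
        have "E t * (2 * C + k/2) * (t - s) \<le> E t - E s" using h2 h3 h4 h5 by linarith
        then have "\<epsilon> * (E t * (2 * C + k/2) * (t - s)) \<le> \<epsilon> * (E t - E s)"
          using ep by (simp add: mult_left_mono)
        then show ?case unfolding B_def b_def by (simp add: algebra_simps)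
      qed
      have "B * (2 * C + k/2) \<le> \<sigma> * (At x t $ 1 $ 1 + At x t $ 2 $ 2)"
        by (rule touch_time[OF dq, of b]) (use eqt bef t ev B_def in auto)
      with Dle have "B * (2 * C + k/2) \<le> (2 * C - 4 * k) * B" by simp
      then have "B * k \<le> 0" by (simp add: algebra_simps)
      moreover have "B * k > 0" using Bpos k_pos by simp
      ultimately show False by simp
    qed
    have ft: "\<forall>t\<in>{0..<T}. \<forall>x. q x t < b t"
      by (rule first_touch[OF qc bc per init]) (rule touch, assumption+)
    show ?thesis using ft unfolding q_def b_def E_def tr2 by blast
  qed
  have trace1: "trace (A x t) = 1" if "t \<in> {0..<T}" for x t
  proof -
    have "\<sigma> * (trace (A x t) - 1) \<le> 0" if "\<sigma> \<in> {-1, 1}" for \<sigma> :: real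
      by (rule small_le0[of "exp (2 * G t + 2 * k * t)"]) (use trace_lt[OF that] \<open>t \<in> {0..<T}\<close> in auto)
    from this[of 1] this[of "-1"] show ?thesis by simp
  qed
  have trall: "trace (A x t) = 1" if "t \<in> {0..T}" for x t
  proof (cases "t = T")
    case True
    have tc: "continuous_on {0..T} (\<lambda>t. trace (A x t))" unfolding tr2 by (intro continuous_intros Acomp)
    have "0 \<le> trace (A x T) - 1" by (rule cont_end[of T "\<lambda>t. trace (A x t) - 1"]) (use tc T_pos trace1 in \<open>auto intro: continuous_intros\<close>)
    moreover have "0 \<le> 1 - trace (A x T)" by (rule cont_end[of T "\<lambda>t. 1 - trace (A x t)"]) (use tc T_pos trace1 in \<open>auto intro: continuous_intros\<close>)
    ultimately show ?thesis using True by simp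
  qed (use that trace1 in auto)
  have Asym: "transpose (A x t) = A x t" if "t \<in> {0..T}" for x t using A_sym that by auto
  have dc0: "continuous_on UNIV (\<lambda>x. det (A x 0))"
  proof -
    have "continuous_on UNIV (\<lambda>x. (\<lambda>(x,t). A x t) (x, 0))"
      by (rule continuous_on_compose2[OF A_cont]) (auto intro!: continuous_intros simp: T_pos less_imp_le)
    then have "continuous_on UNIV (\<lambda>x. A x 0)" by simp
    then show ?thesis unfolding det_2 by (intro continuous_intros)
  qed
  have Kne: "cbox (0::real^2) 1 \<noteq> {}" using red_in by blast
  obtain x0 where x0: "x0 \<in> cbox 0 1" "\<And>y. y \<in> cbox 0 1 \<Longrightarrow> det (A x0 0) \<le> det (A y 0)"
    using continuous_attains_inf[OF compact_cbox Kne continuous_on_subset[OF dc0]] by blast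
  define \<eta> where "\<eta> = det (A x0 0) / 2"
  have T0: "(0::real) \<in> {0..T}" using T_pos by simp
  have eta: "\<eta> > 0" using pd_det[OF Asym[OF T0] init_pd] unfolding \<eta>_def by simp
  have init_det: "det (A x 0) > \<eta>" for x
  proof -
    have "det (A x 0) = det (A (red x) 0)"
      using per_red[OF per_comp[OF A_per[of 0], of det], of x] by simp
    also have "\<dots> \<ge> det (A x0 0)" using x0(2)[OF red_in] .
    finally show ?thesis using eta unfolding \<eta>_def by simp
  qed
  define \<mu> where "\<mu> t = 4 * G t + 9 * k * t" for t
  have \<mu>c: "continuous_on {0..T} \<mu>" unfolding \<mu>_def by (intro continuous_intros Gc)
  have det_lt: "\<forall>t\<in>{0..<T}. \<forall>x. - det (A x t) < - \<eta> * exp (- \<mu> t)"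
  proof -
    define q where "q x t = - (A x t $ 1 $ 1 * A x t $ 2 $ 2 - A x t $ 1 $ 2 * A x t $ 2 $ 1)" for x t
    define E where "E t = exp (- \<mu> t)" for t
    define b where "b t = - \<eta> * E t" for t
    have qdet: "q x t = - det (A x t)" for x t unfolding q_def det_2 ..
    have qc: "continuous_on (UNIV \<times> {0..T}) (\<lambda>(x,t). q x t)"
      unfolding q_def case_prod_beta' by (intro continuous_intros A_cont')
    have Ec: "continuous_on {0..T} E" unfolding E_def by (intro continuous_intros \<mu>c)
    have bc: "continuous_on {0..T} b" unfolding b_def by (intro continuous_intros Ec)
    have per: "periodic2 (\<lambda>x. q x t)" for t
      unfolding qdet by (rule per_comp[OF A_per[of t], of "\<lambda>M. - det M"])
    have G0: "G 0 = 0" unfolding G_def by simp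
    have init: "q x 0 < b 0" for x
      using init_det[of x] unfolding qdet b_def E_def \<mu>_def G0 by simp
    have touch: False if t: "t \<in> {0<..<T}" and eqt: "q x t = b t" and mx: "\<forall>y. q y t \<le> b t"
      and bef: "\<forall>s\<in>{0..<t}. q x s < b s" for x t
    proof -
      define Dd where "Dd = \<eta> * E t"
      have Epos: "E s > 0" for s unfolding E_def by simp
      have Ddpos: "Dd > 0" unfolding Dd_def using eta Epos[of t] by simp
      have tT: "t \<in> {0..T}" using t by auto
      define M where "M = A x t"
      have detM: "det M = Dd" using eqt unfolding qdet b_def Dd_def M_def by simp
      have sp: "ad M (DA i x t) = 0 \<and> 0 \<le> ad M (D2A i i x t)" for i
      proof -
        define P where "P = DA i x t"
        have trl: "A (x + s *\<^sub>R axis i 1) t $ 1 $ 1 + A (x + s *\<^sub>R axis i 1) t $ 2 $ 2 = 1" for s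
          using trall[OF tT, of "x + s *\<^sub>R axis i 1"] unfolding tr2 .
        have syl: "A (x + s *\<^sub>R axis i 1) t $ 1 $ 2 - A (x + s *\<^sub>R axis i 1) t $ 2 $ 1 = 0" for s
          using symD[OF Asym[OF tT, of "x + s *\<^sub>R axis i 1"]] by simp
        have d0: "((\<lambda>s::real. c0) has_real_derivative 0) (at 0)" for c0 :: real by simp
        have "((\<lambda>s. A (x + s *\<^sub>R axis i 1) t $ 1 $ 1 + A (x + s *\<^sub>R axis i 1) t $ 2 $ 2)
            has_real_derivative P $ 1 $ 1 + P $ 2 $ 2) (at 0)"
          unfolding P_def by (intro DERIV_add dl0[OF t])
        then have "((\<lambda>s::real. 1) has_real_derivative P $ 1 $ 1 + P $ 2 $ 2) (at 0)" unfolding trl .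
        then have P1: "P $ 1 $ 1 + P $ 2 $ 2 = 0" using DERIV_unique[OF _ d0] by blast
        have "((\<lambda>s. A (x + s *\<^sub>R axis i 1) t $ 1 $ 2 - A (x + s *\<^sub>R axis i 1) t $ 2 $ 1)
            has_real_derivative P $ 1 $ 2 - P $ 2 $ 1) (at 0)"
          unfolding P_def by (intro DERIV_diff dl0[OF t])
        then have "((\<lambda>s::real. 0) has_real_derivative P $ 1 $ 2 - P $ 2 $ 1) (at 0)" unfolding syl .
        then have P2: "P $ 1 $ 2 - P $ 2 $ 1 = 0" using DERIV_unique[OF _ d0] by blast
        define N where "N = 2 * (P $ 1 $ 1 * P $ 2 $ 2 - P $ 1 $ 2 * P $ 2 $ 1)"
        have Nle: "N \<le> 0"
        proof -
          have "N = - 2 * ((P $ 1 $ 1)^2 + (P $ 1 $ 2)^2)"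
            unfolding N_def using P1 P2 by (simp add: algebra_simps power2_eq_square eq_neg_iff_add_eq_0[symmetric])
          then show ?thesis by simp
        qed
        have "((\<lambda>s. - ad (A (x + s *\<^sub>R axis i 1) t) (DA i (x + s *\<^sub>R axis i 1) t)) 0 = 0)
            \<and> - (ad M (D2A i i x t) + N) \<le> 0"
        proof (rule second_deriv_test[of "\<lambda>s. q (x + s *\<^sub>R axis i 1) t"
            "\<lambda>s. - ad (A (x + s *\<^sub>R axis i 1) t) (DA i (x + s *\<^sub>R axis i 1) t)"])
          fix s
          show "((\<lambda>s. q (x + s *\<^sub>R axis i 1) t) has_real_derivative
               - ad (A (x + s *\<^sub>R axis i 1) t) (DA i (x + s *\<^sub>R axis i 1) t)) (at s)"
            unfolding q_def ad_def by (auto intro!: derivative_eq_intros dl[OF t] simp: algebra_simps)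
        next
          show "((\<lambda>s. - ad (A (x + s *\<^sub>R axis i 1) t) (DA i (x + s *\<^sub>R axis i 1) t))
              has_real_derivative - (ad M (D2A i i x t) + N)) (at 0)"
            unfolding ad_def N_def M_def P_def
            by (auto intro!: derivative_eq_intros dl0[OF t] dl2[OF t] simp: algebra_simps)
        next
          fix s show "q (x + s *\<^sub>R axis i 1) t \<le> q (x + 0 *\<^sub>R axis i 1) t" using mx eqt by simp
        qed
        then have "ad M P = 0" "0 \<le> ad M (D2A i i x t) + N" unfolding P_def M_def by simp_all
        then show ?thesis using Nle unfolding P_def by simp
      qed
      define C where "C = \<bar>c x t\<bar>"
      have Cnn: "C \<ge> 0" unfolding C_def by simp
      have dq: "((\<lambda>s. q x s) has_real_derivative - ad M (At x t)) (at t)"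
        unfolding q_def ad_def M_def by (auto intro!: derivative_eq_intros dt[OF t] simp: algebra_simps)
      have adAt: "ad M (At x t) = -4 * c x t * det M - 2 * k * (4 * det M - trace M)
          + \<nu> * (ad M (D2A 1 1 x t) + ad M (D2A 2 2 x t))"
      proof -
        have e: "ad M (gradmat (\<lambda>i. Du i x t) ** M + M ** transpose (gradmat (\<lambda>i. Du i x t))
          - (2 * ddot (gradmat (\<lambda>i. Du i x t)) M) *\<^sub>R M - (2 * k) *\<^sub>R (2 *\<^sub>R M - mat 1)
          + \<nu> *\<^sub>R (D2A 1 1 x t + D2A 2 2 x t)) = -4 * ddot (gradmat (\<lambda>i. Du i x t)) M * det M
            - 2 * k * (4 * det M - trace M) + \<nu> * ad M (D2A 1 1 x t + D2A 2 2 x t)"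
          by (rule eq_ad[OF divG[OF t]])
        have "ad M (At x t) = ad M (gradmat (\<lambda>i. Du i x t) ** M + M ** transpose (gradmat (\<lambda>i. Du i x t))
          - (2 * ddot (gradmat (\<lambda>i. Du i x t)) M) *\<^sub>R M - (2 * k) *\<^sub>R (2 *\<^sub>R M - mat 1)
          + \<nu> *\<^sub>R (D2A 1 1 x t + D2A 2 2 x t)) - (u x t $ 1 * ad M (DA 1 x t) + u x t $ 2 * ad M (DA 2 x t))"
          unfolding eqn'[OF t] c_def M_def by (simp only: ad_diff ad_add ad_scale)
        also have "\<dots> = -4 * c x t * det M - 2 * k * (4 * det M - trace M)
          + \<nu> * (ad M (D2A 1 1 x t) + ad M (D2A 2 2 x t))"
          unfolding e using sp[of 1] sp[of 2] by (simp add: ad_add c_def M_def)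
        finally show ?thesis .
      qed
      have trM: "trace M = 1" unfolding M_def using trall[OF tT] .
      have Dle: "- ad M (At x t) \<le> (4 * C + 8 * k) * Dd"
      proof -
        have "0 \<le> \<nu> * (ad M (D2A 1 1 x t) + ad M (D2A 2 2 x t))"
          using sp[of 1] sp[of 2] nu_pos by simp
        moreover have "c x t * Dd \<le> C * Dd" using Ddpos unfolding C_def by (intro mult_right_mono) auto
        ultimately show ?thesis unfolding adAt detM trM using k_pos by (simp add: algebra_simps)
      qed
      have ev1: "eventually (\<lambda>s. (C - k/8) * (t - s) \<le> G t - G s) (at_left t)"
        unfolding G_def C_def using G_bound[OF gi cc[of x] hg t, of "k/8"] k_pos by simp
      have ev3: "eventually (\<lambda>s. s \<in> {0<..<t}) (at_left t)" using eventually_at_left_real t by simp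
      have ev: "eventually (\<lambda>s. Dd * (4 * C + 17 * k / 2) * (t - s) \<le> b t - b s) (at_left t)"
        using ev1 ev3
      proof eventually_elim
        case (elim s)
        have ts: "t - s > 0" using elim(2) by simp
        have h1: "\<mu> t - \<mu> s \<ge> (4 * C + 17 * k / 2) * (t - s)"
        proof -
          have "(4 * C + 17 * k / 2) * (t - s) = 4 * ((C - k/8) * (t - s)) + 9 * k * (t - s)" by (simp add: field_simps)
          moreover have "k * (t - s) = k * t - k * s" by (simp add: algebra_simps)
          ultimately show ?thesis using elim(1) unfolding \<mu>_def by linarith
        qed
        have h2: "E s - E t \<ge> E t * (\<mu> t - \<mu> s)"
          using exp_diff_ge[of "- \<mu> t" "- \<mu> s"] unfolding E_def by simp
        have h3: "E t * (\<mu> t - \<mu> s) \<ge> E t * ((4 * C + 17 * k / 2) * (t - s))"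
          using h1 Epos[of t] by (simp add: mult_left_mono)
        have "\<eta> * (E t * ((4 * C + 17 * k / 2) * (t - s))) \<le> \<eta> * (E s - E t)"
          using h2 h3 eta by (intro mult_left_mono) auto
        then show ?case unfolding b_def Dd_def by (simp add: algebra_simps)
      qed
      have "Dd * (4 * C + 17 * k / 2) \<le> - ad M (At x t)"
        by (rule touch_time[OF dq, of b]) (use eqt bef t ev Dd_def b_def in auto)
      with Dle have "Dd * (4 * C + 17 * k / 2) \<le> (4 * C + 8 * k) * Dd" by simp
      then have "Dd * k \<le> 0" by (simp add: algebra_simps)
      moreover have "Dd * k > 0" using Ddpos k_pos by simp
      ultimately show False by simp
    qed
    have ft: "\<forall>t\<in>{0..<T}. \<forall>x. q x t < b t"
      by (rule first_touch[OF qc bc per init]) (rule touch, assumption+)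
    show ?thesis using ft unfolding qdet b_def E_def by simp
  qed
  have detpos: "det (A x t) > 0" if "t \<in> {0..T}" for x t
  proof (cases "t = T")
    case True
    have dc: "continuous_on {0..T} (\<lambda>t. det (A x t) - \<eta> * exp (- \<mu> t))"
      unfolding det_2 by (intro continuous_intros Acomp \<mu>c)
    have "0 \<le> det (A x T) - \<eta> * exp (- \<mu> T)"
    proof (rule cont_end[OF dc T_pos])
      fix s assume "s \<in> {0..<T}"
      then have "- det (A x s) < - \<eta> * exp (- \<mu> s)" using det_lt by blast
      then show "0 \<le> det (A x s) - \<eta> * exp (- \<mu> s)" by simp
    qed
    moreover have "\<eta> * exp (- \<mu> T) > 0" using eta by simp
    ultimately show ?thesis using True by simp
  next
    case False
    then have "t \<in> {0..<T}" using that by auto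
    then have "- det (A x t) < - \<eta> * exp (- \<mu> t)" using det_lt by blast
    moreover have "\<eta> * exp (- \<mu> t) > 0" using eta by simp
    ultimately show ?thesis by simp
  qed
  show ?thesis
  proof (intro ballI allI conjI)
    fix t x assume "t \<in> {0..T}"
    then show "pos_def (A x t)" using det_pd[OF Asym trall detpos] by blast
    show "trace (A x t) = 1" using trall \<open>t \<in> {0..T}\<close> by blast
  qed
qed

end
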